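(* Let $G=(V,E,X)$ be a spatial graph with $E\neq\emptyset$, let $(R,A,k)\in\mathrm{Sim}(p)$ and $G'=\psi(G,(R,A,k))=(V,E,kRX+A)$. Assume $0<\sup_{\theta\ge0} d_B(PD(G),PD(f_\theta(G)))<\infty$ and that this supremum is attained. Then for every $\theta\ge0$, $S_{k\theta}(G')=S_\theta(G)$; consequently $\arg\min_{\beta\ge0}S_\beta(G')=k\cdot\arg\min_{\theta\ge0}S_\theta(G)$. In particular, if $\theta^*$ minimizes $\theta\mapsto S_\theta(G)$, then $\beta^*=k\theta^*$ minimizes $\beta\mapsto S_\beta(G')$, and the topological spatial graph coarsening $F(G)=f_{\theta^*}(G)$ is equivariant: $$F(\psi(G,(R,A,k)))=f_{k\theta^*}(G')=\psi(F(G),(R,A,k)).$$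
   Context: A spatial graph is a triple $G=(V,E,X)$ with finite node set $V$, undirected edge set $E\subseteq V\times V$, positions $x_u\in\mathbb{R}^p$, and edge lengths $\ell_{u,v}=\|x_u-x_v\|$. For $\theta\ge0$, $sub(G,\theta)=(V,\{(u,v)\in E:\ell_{u,v}\le\theta\})$. Coarsening: $f_\theta(G)=(f^V_\theta(G),f^E_\theta(G),f^X_\theta(G))$, where $f^V_\theta(G)=\{V_1,\dots,V_K\}$ is the partition of $V$ into vertex sets of connected components of $sub(G,\theta)$ (hypernodes); $f^E_\theta(G)$ contains $(V_i,V_j)$ for distinct hypernodes iff some $u\in V_i$, $v\in V_j$ have $(u,v)\in E$; positions are either average positioning $f^X_\theta(G)_i=\frac1{|V_i|}\sum_{u\in V_i}x_u$ or degree positioning $f^X_\theta(G)_i=x_u$, $u=\arg\max_{v\in V_i}\deg(v)$ (degree in $(V,E)$, ties broken by a fixed rule depending only on $(V,E)$). The coarsened graph is a spatial graph with Euclidean edge lengths between hypernode positions. Similarity action: for $R\in O_p(\mathbb{R})$, $A\in\mathbb{R}^p$, $k>0$, $\psi(G,(R,A,k))$ replaces each position $x$ by $kRx+A$ (for any spatial graph, including coarsened ones). Shortest-path distance $d_G(u,v)$: minimal total length of a path from $u$ to $v$ in $(V,E)$ ($0$ if $u=v$, $+\infty$ if none). Triangle-aware filtration $\widetilde{\mathcal C}(G)$: simplex $\sigma\subseteq V$ enters at scale $t(\sigma)$, with $t(\{u\})=0$, $t(\{u,v\})=d_G(u,v)$, $t(\{u,v,w\})=\min\{d_G(u,v)+d_G(v,w),d_G(u,w)+d_G(v,w),d_G(u,v)+d_G(u,w)\}$,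 and for dimension $\ge3$, $t(\sigma)$ is the max of $t$ over its codimension-one faces. $PD(G)$ is the persistence diagram (multiset of points $(r_b,r_d)$, over a fixed set of homological dimensions) of this filtration. Bottleneck distance: for diagrams $\mu,\nu$ and diagonal $\Delta=\{(a,a):a\in\mathbb{R}\}$, $d_B(\mu,\nu)=\inf_{\pi}\sup_{x}\|x-\pi(x)\|_\infty$, the infimum over bijections $\pi:\mu\cup\Delta\to\nu\cup\Delta$. Score: $S_\theta(G)=\frac{|f^E_\theta(G)|}{|E|}+\lambda(G)\,d_B(PD(G),PD(f_\theta(G)))$ with $\lambda(G)=\big[\max_{\theta\ge0}d_B(PD(G),PD(f_\theta(G)))\big]^{-1}$. The topological spatial graph coarsening is $F(G)=f_{\theta^*}(G)$ with $\theta^*\in\arg\min_{\theta\ge0}S_\theta(G)$. *)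

theory Defs
  imports "HOL-Analysis.Analysis"
begin

text \<open>A spatial graph (V, E, X): finite vertex set V, edge set E of pairs in V x V
  (read as undirected edges), positions X in real^p.\<close>

type_synonym ('v, 'p) sgraph = "'v set \<times> ('v \<times> 'v) set \<times> ('v \<Rightarrow> real ^ 'p)"

definition sg_wf :: "('v, 'p::finite) sgraph \<Rightarrow> bool" where
  "sg_wf G = (case G of (V, E, X) \<Rightarrow> finite V \<and> E \<subseteq> V \<times> V)"

definition len :: "('v \<Rightarrow> real ^ 'p::finite) \<Rightarrow> 'v \<Rightarrow> 'v \<Rightarrow> real" where
  "len X u v = norm (X u - X v)"

text \<open>Number of undirected edges (a pair and its reverse are the same edge).\<close>
definition ecount :: "('v \<times> 'v) set \<Rightarrow> nat" where
  "ecount E = card ((\<lambda>(u, v). {u, v}) ` E)"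

definition subE :: "('v \<times> 'v) set \<Rightarrow> ('v \<Rightarrow> real ^ 'p::finite) \<Rightarrow> real \<Rightarrow> ('v \<times> 'v) set" where
  "subE E X \<theta> = {(u, v) \<in> E. len X u v \<le> \<theta>}"

definition hypernodes :: "'v set \<Rightarrow> ('v \<times> 'v) set \<Rightarrow> ('v \<Rightarrow> real ^ 'p::finite) \<Rightarrow> real \<Rightarrow> 'v set set" where
  "hypernodes V E X \<theta> = V // ((subE E X \<theta> \<union> converse (subE E X \<theta>))\<^sup>*)"

definition coarseE :: "'v set \<Rightarrow> ('v \<times> 'v) set \<Rightarrow> ('v \<Rightarrow> real ^ 'p::finite) \<Rightarrow> real \<Rightarrow> ('v set \<times> 'v set) set" where
  "coarseE V E X \<theta> = {(A, B). A \<in> hypernodes V E X \<theta> \<and> B \<in> hypernodes V E X \<theta> \<and> A \<noteq> B \<and>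
      (\<exists>u\<in>A. \<exists>v\<in>B. (u, v) \<in> E)}"

definition deg :: "'v set \<Rightarrow> ('v \<times> 'v) set \<Rightarrow> 'v \<Rightarrow> nat" where
  "deg V E v = card {w \<in> V. (v, w) \<in> E \<or> (w, v) \<in> E}"

text \<open>Positioning rule: average positioning, or degree positioning with a tie-breaking rule
  tb V E S (depending only on (V,E)) choosing an element of the set S of max-degree vertices.\<close>
datatype 'v positioning = AvgPos | DegPos "'v set \<Rightarrow> ('v \<times> 'v) set \<Rightarrow> 'v set \<Rightarrow> 'v"

definition valid_pos :: "'v positioning \<Rightarrow> bool" where
  "valid_pos P = (case P of AvgPos \<Rightarrow> True
     | DegPos tb \<Rightarrow> (\<forall>V E S. S \<noteq> {} \<longrightarrow> tb V E S \<in> S))"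

definition coarseX :: "'v positioning \<Rightarrow> 'v set \<Rightarrow> ('v \<times> 'v) set \<Rightarrow> ('v \<Rightarrow> real ^ 'p::finite) \<Rightarrow> 'v set \<Rightarrow> real ^ 'p::finite" where
  "coarseX P V E X A = (case P of
      AvgPos \<Rightarrow> (1 / real (card A)) *\<^sub>R (\<Sum>u\<in>A. X u)
    | DegPos tb \<Rightarrow> X (tb V E {u \<in> A. \<forall>w\<in>A. deg V E w \<le> deg V E u}))"

definition coarsen :: "'v positioning \<Rightarrow> real \<Rightarrow> ('v, 'p::finite) sgraph \<Rightarrow> ('v set, 'p) sgraph" where
  "coarsen P \<theta> G = (case G of (V, E, X) \<Rightarrow>
      (hypernodes V E X \<theta>, coarseE V E X \<theta>, coarseX P V E X))"

definition simact :: "real ^ 'p::finite ^ 'p \<Rightarrow> real ^ 'p::finite \<Rightarrow> real \<Rightarrow> ('v, 'p::finite) sgraph \<Rightarrow> ('v, 'p::finite) sgraph" where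
  "simact R A k G = (case G of (V, E, X) \<Rightarrow> (V, E, \<lambda>u. k *\<^sub>R (R *v X u) + A))"

text \<open>Equality of spatial graphs: same nodes, same edges, same positions at the nodes
  (positions outside V are meaningless).\<close>
definition sg_eq :: "('v, 'p::finite) sgraph \<Rightarrow> ('v, 'p::finite) sgraph \<Rightarrow> bool" where
  "sg_eq G H = (fst G = fst H \<and> fst (snd G) = fst (snd H) \<and>
      (\<forall>v\<in>fst G. snd (snd G) v = snd (snd H) v))"

definition walk :: "('v \<times> 'v) set \<Rightarrow> 'v \<Rightarrow> 'v \<Rightarrow> 'v list \<Rightarrow> bool" where
  "walk E u v ps = (ps \<noteq> [] \<and> hd ps = u \<and> last ps = v \<and>
     (\<forall>i < length ps - 1. (ps ! i, ps ! (i + 1)) \<in> E \<or> (ps ! (i + 1), ps ! i) \<in> E))"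

definition wlen :: "('v \<Rightarrow> real ^ 'p::finite) \<Rightarrow> 'v list \<Rightarrow> real" where
  "wlen X ps = (\<Sum>i < length ps - 1. len X (ps ! i) (ps ! (i + 1)))"

text \<open>Shortest-path distance, +infinity if no path.\<close>
definition spd :: "('v, 'p::finite) sgraph \<Rightarrow> 'v \<Rightarrow> 'v \<Rightarrow> ereal" where
  "spd G u v = (case G of (V, E, X) \<Rightarrow>
      Inf {ereal (wlen X ps) | ps. walk E u v ps \<and> set ps \<subseteq> V})"

definition tbase :: "('v \<Rightarrow> 'v \<Rightarrow> ereal) \<Rightarrow> 'v set \<Rightarrow> ereal" where
  "tbase d \<sigma> = (if card \<sigma> = 1 then 0
     else if card \<sigma> = 2 then Min {d u v | u v. \<sigma> = {u, v} \<and> u \<noteq> v}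
     else Min {d u v + d v w | u v w. \<sigma> = {u, v, w} \<and> u \<noteq> v \<and> v \<noteq> w \<and> u \<noteq> w})"

primrec tvn :: "('v \<Rightarrow> 'v \<Rightarrow> ereal) \<Rightarrow> nat \<Rightarrow> 'v set \<Rightarrow> ereal" where
  "tvn d 0 \<sigma> = tbase d \<sigma>"
| "tvn d (Suc n) \<sigma> = (if card \<sigma> \<le> 3 then tbase d \<sigma>
      else Max ((\<lambda>v. tvn d n (\<sigma> - {v})) ` \<sigma>))"

definition ftime :: "('v, 'p::finite) sgraph \<Rightarrow> 'v set \<Rightarrow> ereal" where
  "ftime G \<sigma> = tvn (spd G) (card \<sigma>) \<sigma>"

definition cplx :: "('v, 'p::finite) sgraph \<Rightarrow> real \<Rightarrow> 'v set set" where
  "cplx G s = {\<sigma>. \<sigma> \<subseteq> fst G \<and> \<sigma> \<noteq> {} \<and> ftime G \<sigma> \<le> ereal s}"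

text \<open>GF(2)-chains are sets of simplices (sum = symmetric difference).\<close>
definition ksimp :: "'v set set \<Rightarrow> nat \<Rightarrow> 'v set set" where
  "ksimp K k = {\<sigma> \<in> K. card \<sigma> = Suc k}"

definition bd :: "'v set set \<Rightarrow> 'v set set" where
  "bd c = {\<tau>. \<tau> \<noteq> {} \<and> odd (card {\<sigma> \<in> c. \<tau> \<subseteq> \<sigma> \<and> card \<sigma> = Suc (card \<tau>)})}"

definition cycles :: "'v set set \<Rightarrow> nat \<Rightarrow> 'v set set set" where
  "cycles K k = {c. c \<subseteq> ksimp K k \<and> bd c = {}}"

definition bounds :: "'v set set \<Rightarrow> nat \<Rightarrow> 'v set set set" where
  "bounds K k = bd ` Pow (ksimp K (Suc k))"

text \<open>Dimension of a finite GF(2)-vector space: it has 2^n elements.\<close>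
definition f2dim :: "'a set \<Rightarrow> nat" where
  "f2dim S = (THE n. card S = 2 ^ n)"

text \<open>Rank of H_k(K) -> H_k(L) for K a subcomplex of L: dim Z_k(K) - dim (Z_k(K) \<inter> B_k(L)).\<close>
definition prank :: "'v set set \<Rightarrow> 'v set set \<Rightarrow> nat \<Rightarrow> int" where
  "prank K L k = int (f2dim (cycles K k)) - int (f2dim (cycles K k \<inter> bounds L k))"

definition rk :: "('v, 'p::finite) sgraph \<Rightarrow> nat \<Rightarrow> real \<Rightarrow> real \<Rightarrow> int" where
  "rk G k s t = prank (cplx G s) (cplx G t) k"

text \<open>Multiplicity of (b, d) in the degree-k diagram (b real, b < d, d possibly infinite).\<close>
definition mult :: "('v, 'p::finite) sgraph \<Rightarrow> nat \<Rightarrow> real \<Rightarrow> ereal \<Rightarrow> int" where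
  "mult G k b d = (case d of
      ereal d' \<Rightarrow> (THE m. eventually (\<lambda>\<epsilon>. rk G k b (d' - \<epsilon>) - rk G k (b - \<epsilon>) (d' - \<epsilon>)
                        - rk G k b d' + rk G k (b - \<epsilon>) d' = m) (at_right 0))
    | PInfty \<Rightarrow> (THE m. eventually (\<lambda>\<epsilon>. eventually (\<lambda>T. rk G k b T - rk G k (b - \<epsilon>) T = m) at_top)
                        (at_right 0))
    | MInfty \<Rightarrow> 0)"

text \<open>Persistence diagram over the fixed set D of homological dimensions, as a multiplicity
  function on points (b, d).\<close>
definition PD :: "nat set \<Rightarrow> ('v, 'p::finite) sgraph \<Rightarrow> ereal \<times> ereal \<Rightarrow> nat" where
  "PD D G x = (if (\<exists>b. fst x = ereal b) \<and> fst x < snd x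
      then nat (\<Sum>k\<in>D. mult G k (real_of_ereal (fst x)) (snd x)) else 0)"

text \<open>Elements of mu \<union> Delta: copies of the points of mu (with multiplicity) and the diagonal points.\<close>
definition slots :: "(ereal \<times> ereal \<Rightarrow> nat) \<Rightarrow> ((ereal \<times> ereal) \<times> nat + real) set" where
  "slots \<mu> = Inl ` {(x, i). i < \<mu> x} \<union> Inr ` UNIV"

fun slotpt :: "((ereal \<times> ereal) \<times> nat + real) \<Rightarrow> ereal \<times> ereal" where
  "slotpt (Inl (x, i)) = x"
| "slotpt (Inr a) = (ereal a, ereal a)"

definition cdist :: "ereal \<Rightarrow> ereal \<Rightarrow> ereal" where
  "cdist a b = (if a = b then 0 else \<bar>a - b\<bar>)"

definition linf :: "ereal \<times> ereal \<Rightarrow> ereal \<times> ereal \<Rightarrow> ereal" where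
  "linf x y = max (cdist (fst x) (fst y)) (cdist (snd x) (snd y))"

definition bottleneck :: "(ereal \<times> ereal \<Rightarrow> nat) \<Rightarrow> (ereal \<times> ereal \<Rightarrow> nat) \<Rightarrow> ereal" where
  "bottleneck \<mu> \<nu> = (INF \<pi> \<in> {\<pi>. bij_betw \<pi> (slots \<mu>) (slots \<nu>)}.
      SUP x \<in> slots \<mu>. linf (slotpt x) (slotpt (\<pi> x)))"

definition dBth :: "'v positioning \<Rightarrow> nat set \<Rightarrow> ('v, 'p::finite) sgraph \<Rightarrow> real \<Rightarrow> ereal" where
  "dBth P D G \<theta> = bottleneck (PD D G) (PD D (coarsen P \<theta> G))"

definition dBmax :: "'v positioning \<Rightarrow> nat set \<Rightarrow> ('v, 'p::finite) sgraph \<Rightarrow> ereal" where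
  "dBmax P D G = (SUP \<theta> \<in> {0..}. dBth P D G \<theta>)"

definition score :: "'v positioning \<Rightarrow> nat set \<Rightarrow> ('v, 'p::finite) sgraph \<Rightarrow> real \<Rightarrow> real" where
  "score P D G \<theta> = real (ecount (fst (snd (coarsen P \<theta> G)))) / real (ecount (fst (snd G)))
      + (1 / real_of_ereal (dBmax P D G)) * real_of_ereal (dBth P D G \<theta>)"

definition is_minimizer :: "(real \<Rightarrow> real) \<Rightarrow> real \<Rightarrow> bool" where
  "is_minimizer f \<theta> = (\<theta> \<ge> 0 \<and> (\<forall>\<theta>' \<ge> 0. f \<theta> \<le> f \<theta>'))"

end

theory Submission
  imports Defs
begin
lemma len_sim:
  assumes "orthogonal_matrix R" "k > 0"
  shows "len (\<lambda>u. k *\<^sub>R (R *v Y u) + A) u v = k * len Y u v"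
proof -
  have ot: "orthogonal_transformation ((*v) R)"
    using assms(1) by (simp add: orthogonal_transformation_matrix)
  have "(k *\<^sub>R (R *v Y u) + A) - (k *\<^sub>R (R *v Y v) + A) = k *\<^sub>R (R *v (Y u - Y v))"
    by (simp add: algebra_simps)
  then show ?thesis using assms(2) orthogonal_transformation_norm[OF ot]
    by (simp add: len_def)
qed
lemma mono_cmult: "(k::real) > 0 \<Longrightarrow> mono (\<lambda>x::ereal. ereal k * x)"
  by (simp add: mono_def ereal_mult_left_mono)
lemma cmult_le_iff: "(k::real) > 0 \<Longrightarrow> (ereal k * x \<le> ereal k * y) = (x \<le> y)"
  by (simp add: ereal_mult_le_mult_iff)
lemma cmult_less_iff: "(k::real) > 0 \<Longrightarrow> (ereal k * x < ereal k * y) = (x < y)"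
  by (meson cmult_le_iff not_le)

lemma cmult_inv: "(k::real) > 0 \<Longrightarrow> ereal (1/k) * (ereal k * x) = x"
  by (cases x) auto

lemma cmult_inv2: "(k::real) > 0 \<Longrightarrow> ereal k * (ereal (1/k) * x) = x"
  by (cases x) auto

lemma cmult_Inf: assumes "(k::real) > 0" shows "ereal k * Inf S = Inf ((\<lambda>x. ereal k * x) ` S)"
proof (rule antisym)
  show "ereal k * Inf S \<le> Inf ((\<lambda>x. ereal k * x) ` S)"
    by (rule Inf_greatest) (auto intro: Inf_lower simp: cmult_le_iff[OF assms])
  have k': "(1/k) > 0" using assms by simp
  have "ereal (1/k) * Inf ((\<lambda>x. ereal k * x) ` S) \<le> Inf S"
    apply (rule Inf_greatest)
    using cmult_inv[OF assms] cmult_le_iff[OF k'] by (metis Inf_lower imageI)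
  then have "ereal k * (ereal (1/k) * Inf ((\<lambda>x. ereal k * x) ` S)) \<le> ereal k * Inf S"
    using cmult_le_iff[OF assms] by blast
  then show "Inf ((\<lambda>x. ereal k * x) ` S) \<le> ereal k * Inf S"
    by (simp only: cmult_inv2[OF assms])
qed

lemma cmult_Sup: assumes "(k::real) > 0" shows "ereal k * Sup S = Sup ((\<lambda>x. ereal k * x) ` S)"
proof (rule antisym)
  show "Sup ((\<lambda>x. ereal k * x) ` S) \<le> ereal k * Sup S"
    by (rule Sup_least) (auto intro: Sup_upper simp: cmult_le_iff[OF assms])
  have k': "(1/k) > 0" using assms by simp
  have "Sup S \<le> ereal (1/k) * Sup ((\<lambda>x. ereal k * x) ` S)"
    apply (rule Sup_least)
    using cmult_inv[OF assms] cmult_le_iff[OF k'] by (metis Sup_upper imageI)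
  then have "ereal k * Sup S \<le> ereal k * (ereal (1/k) * Sup ((\<lambda>x. ereal k * x) ` S))"
    using cmult_le_iff[OF assms] by blast
  then show "ereal k * Sup S \<le> Sup ((\<lambda>x. ereal k * x) ` S)"
    by (simp only: cmult_inv2[OF assms])
qed

lemma cmult_add: "(k::real) > 0 \<Longrightarrow> ereal k * (x + y) = ereal k * x + ereal k * y"
  by (cases x; cases y) (auto simp: algebra_simps)

lemma wlen_scale:
  assumes "\<forall>u\<in>V. \<forall>v\<in>V. len X' u v = k * len X u v" "set ps \<subseteq> V"
  shows "wlen X' ps = k * wlen X ps"
proof -
  have "\<forall>i < length ps - 1. len X' (ps ! i) (ps ! (i + 1)) = k * len X (ps ! i) (ps ! (i + 1))"
    using assms by (auto intro!: nth_mem dest!: bspec)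
  then show ?thesis unfolding wlen_def by (simp add: sum_distrib_left)
qed

lemma spd_scale:
  assumes "k > 0" "\<forall>u\<in>V. \<forall>v\<in>V. len X' u v = k * len X u v"
  shows "spd (V, E, X') u v = ereal k * spd (V, E, X) u v"
proof -
  have "{ereal (wlen X' ps) | ps. walk E u v ps \<and> set ps \<subseteq> V}
      = (\<lambda>x. ereal k * x) ` {ereal (wlen X ps) | ps. walk E u v ps \<and> set ps \<subseteq> V}"
  proof (rule set_eqI, rule iffI)
    fix x assume "x \<in> {ereal (wlen X' ps) | ps. walk E u v ps \<and> set ps \<subseteq> V}"
    then obtain ps where "x = ereal (wlen X' ps)" "walk E u v ps" "set ps \<subseteq> V" by blast
    then show "x \<in> (\<lambda>x. ereal k * x) ` {ereal (wlen X ps) | ps. walk E u v ps \<and> set ps \<subseteq> V}"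
      using wlen_scale[OF assms(2)] by (auto simp: image_iff)
  next
    fix x assume "x \<in> (\<lambda>x. ereal k * x) ` {ereal (wlen X ps) | ps. walk E u v ps \<and> set ps \<subseteq> V}"
    then obtain ps where "x = ereal k * ereal (wlen X ps)" "walk E u v ps" "set ps \<subseteq> V" by blast
    then show "x \<in> {ereal (wlen X' ps) | ps. walk E u v ps \<and> set ps \<subseteq> V}"
      using wlen_scale[OF assms(2)] by (metis (mono_tags, lifting) mem_Collect_eq times_ereal.simps(1))
  qed
  then show ?thesis unfolding spd_def by (simp add: cmult_Inf[OF assms(1)])
qed

lemma tbase_scale:
  assumes "k > 0" "finite \<sigma>" "\<sigma> \<noteq> {}" "card \<sigma> \<le> 3" "\<forall>u\<in>\<sigma>. \<forall>v\<in>\<sigma>. d' u v = ereal k * d u v"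
  shows "tbase d' \<sigma> = ereal k * tbase d \<sigma>"
proof -
  have mono: "mono (\<lambda>x. ereal k * x)" using mono_cmult[OF assms(1)] .
  have "card \<sigma> \<noteq> 0" using assms(2,3) by simp
  then consider "card \<sigma> = 1" | "card \<sigma> = 2" | "card \<sigma> = 3" using assms(4) by linarith
  then show ?thesis
  proof cases
    case 1 then show ?thesis by (simp add: tbase_def)
  next
    case 2
    then obtain a b where ab: "\<sigma> = {a, b}" "a \<noteq> b" by (meson card_2_iff)
    let ?S = "{d u v | u v. \<sigma> = {u, v} \<and> u \<noteq> v}"
    have eq: "{d' u v | u v. \<sigma> = {u, v} \<and> u \<noteq> v} = (\<lambda>x. ereal k * x) ` ?S"
    proof (rule set_eqI, rule iffI)
      fix x assume "x \<in> {d' u v | u v. \<sigma> = {u, v} \<and> u \<noteq> v}"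
      then obtain u v where uv: "x = d' u v" "\<sigma> = {u, v}" "u \<noteq> v" by blast
      then have "x = ereal k * d u v" using assms(5) by simp
      then show "x \<in> (\<lambda>x. ereal k * x) ` ?S" using uv by blast
    next
      fix x assume "x \<in> (\<lambda>x. ereal k * x) ` ?S"
      then obtain u v where uv: "x = ereal k * d u v" "\<sigma> = {u, v}" "u \<noteq> v" by blast
      then have "x = d' u v" using assms(5) by simp
      then show "x \<in> {d' u v | u v. \<sigma> = {u, v} \<and> u \<noteq> v}" using uv by blast
    qed
    have fin: "finite ?S"
    proof -
      have "?S \<subseteq> (\<lambda>(u,v). d u v) ` (\<sigma> \<times> \<sigma>)"
      proof
        fix x assume "x \<in> ?S"
        then obtain u v where "x = d u v" "\<sigma> = {u, v}" by blast
        then show "x \<in> (\<lambda>(u,v). d u v) ` (\<sigma> \<times> \<sigma>)"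
          by (intro rev_image_eqI[of "(u,v)"]) auto
      qed
      then show ?thesis by (rule finite_subset) (simp add: assms(2))
    qed
    have ne: "?S \<noteq> {}" using ab by auto
    show ?thesis using 2 eq mono_Min_commute[OF mono fin ne] by (simp add: tbase_def)
  next
    case 3
    then obtain a b c where abc: "\<sigma> = {a, b, c}" "a \<noteq> b" "b \<noteq> c" "a \<noteq> c" by (meson card_3_iff)
    let ?S = "{d u v + d v w | u v w. \<sigma> = {u, v, w} \<and> u \<noteq> v \<and> v \<noteq> w \<and> u \<noteq> w}"
    have eq: "{d' u v + d' v w | u v w. \<sigma> = {u, v, w} \<and> u \<noteq> v \<and> v \<noteq> w \<and> u \<noteq> w} = (\<lambda>x. ereal k * x) ` ?S"
    proof (rule set_eqI, rule iffI)
      fix x assume "x \<in> {d' u v + d' v w | u v w. \<sigma> = {u, v, w} \<and> u \<noteq> v \<and> v \<noteq> w \<and> u \<noteq> w}"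
      then obtain u v w where uv: "x = d' u v + d' v w" "\<sigma> = {u, v, w}" "u \<noteq> v" "v \<noteq> w" "u \<noteq> w" by blast
      then have "x = ereal k * (d u v + d v w)" using assms(5) by (simp add: cmult_add[OF assms(1)])
      then show "x \<in> (\<lambda>x. ereal k * x) ` ?S" using uv by blast
    next
      fix x assume "x \<in> (\<lambda>x. ereal k * x) ` ?S"
      then obtain u v w where uv: "x = ereal k * (d u v + d v w)" "\<sigma> = {u, v, w}" "u \<noteq> v" "v \<noteq> w" "u \<noteq> w" by blast
      then have "x = d' u v + d' v w" using assms(5) by (simp add: cmult_add[OF assms(1)])
      then show "x \<in> {d' u v + d' v w | u v w. \<sigma> = {u, v, w} \<and> u \<noteq> v \<and> v \<noteq> w \<and> u \<noteq> w}" using uv by blast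
    qed
    have fin: "finite ?S"
    proof -
      have "?S \<subseteq> (\<lambda>(u,v,w). d u v + d v w) ` (\<sigma> \<times> \<sigma> \<times> \<sigma>)"
      proof
        fix x assume "x \<in> ?S"
        then obtain u v w where "x = d u v + d v w" "\<sigma> = {u, v, w}" by blast
        then show "x \<in> (\<lambda>(u,v,w). d u v + d v w) ` (\<sigma> \<times> \<sigma> \<times> \<sigma>)"
          by (intro rev_image_eqI[of "(u,v,w)"]) auto
      qed
      then show ?thesis by (rule finite_subset) (simp add: assms(2))
    qed
    have ne: "?S \<noteq> {}" using abc by auto
    show ?thesis using 3 eq mono_Min_commute[OF mono fin ne] by (simp add: tbase_def)
  qed
qed

lemma tvn_scale:
  assumes "k > 0"
  shows "finite \<sigma> \<Longrightarrow> \<sigma> \<noteq> {} \<Longrightarrow> card \<sigma> = n \<Longrightarrow> \<forall>u\<in>\<sigma>. \<forall>v\<in>\<sigma>. d' u v = ereal k * d u v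
    \<Longrightarrow> tvn d' n \<sigma> = ereal k * tvn d n \<sigma>"
proof (induction n arbitrary: \<sigma>)
  case 0 then show ?case by simp
next
  case (Suc n)
  show ?case
  proof (cases "card \<sigma> \<le> 3")
    case True then show ?thesis using tbase_scale[OF assms, of \<sigma> d' d] Suc.prems by simp
  next
    case False
    have IH: "\<And>v. v \<in> \<sigma> \<Longrightarrow> tvn d' n (\<sigma> - {v}) = ereal k * tvn d n (\<sigma> - {v})"
    proof -
      fix v assume v: "v \<in> \<sigma>"
      show "tvn d' n (\<sigma> - {v}) = ereal k * tvn d n (\<sigma> - {v})"
        apply (rule Suc.IH)
        using Suc.prems v False apply (auto simp: card_Diff_singleton)
        using card_mono[of "{v}" \<sigma>] by simp
    qed
    have "Max ((\<lambda>v. tvn d' n (\<sigma> - {v})) ` \<sigma>) = Max ((\<lambda>x. ereal k * x) ` ((\<lambda>v. tvn d n (\<sigma> - {v})) ` \<sigma>))"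
      using IH by (simp add: image_image cong: image_cong)
    also have "\<dots> = ereal k * Max ((\<lambda>v. tvn d n (\<sigma> - {v})) ` \<sigma>)"
      using mono_Max_commute[OF mono_cmult[OF assms]] Suc.prems by simp
    finally show ?thesis using False by simp
  qed
qed


lemma ev_right_scale:
  assumes "(k::real) > 0"
  shows "eventually (\<lambda>e. P (e / k)) (at_right 0) = eventually P (at_right (0::real))"
proof
  assume "eventually (\<lambda>e. P (e / k)) (at_right 0)"
  then obtain b where b: "b > 0" "\<forall>y>0. y < b \<longrightarrow> P (y / k)" by (auto simp: eventually_at_right_field)
  have "\<forall>y>0. y < b / k \<longrightarrow> P y"
  proof (intro allI impI)
    fix y :: real assume "y > 0" "y < b / k"
    then have "k * y > 0" "k * y < b" using assms by (auto simp: field_simps)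
    then show "P y" using b(2) assms by force
  qed
  moreover have "b / k > 0" using b(1) assms by simp
  ultimately show "eventually P (at_right 0)" unfolding eventually_at_right_field by blast
next
  assume "eventually P (at_right 0)"
  then obtain b where b: "b > 0" "\<forall>y>0. y < b \<longrightarrow> P y" by (auto simp: eventually_at_right_field)
  have "\<forall>y>0. y < b * k \<longrightarrow> P (y / k)"
    using b assms by (auto simp: field_simps)
  moreover have "b * k > 0" using b(1) assms by simp
  ultimately show "eventually (\<lambda>e. P (e / k)) (at_right 0)" unfolding eventually_at_right_field by blast
qed

lemma ev_top_scale:
  assumes "(k::real) > 0"
  shows "eventually (\<lambda>T. P (T / k)) at_top = eventually P (at_top::real filter)"
proof
  assume "eventually (\<lambda>T. P (T / k)) at_top"
  then obtain N where N: "\<forall>n\<ge>N. P (n / k)" by (auto simp: eventually_at_top_linorder)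
  have "\<forall>n\<ge>N/k. P n"
  proof (intro allI impI)
    fix n assume "n \<ge> N / k"
    then have "k * n \<ge> N" using assms by (auto simp: field_simps)
    then show "P n" using N assms by force
  qed
  then show "eventually P at_top" by (auto simp: eventually_at_top_linorder)
next
  assume "eventually P at_top"
  then obtain N where N: "\<forall>n\<ge>N. P n" by (auto simp: eventually_at_top_linorder)
  have "\<forall>n\<ge>N*k. P (n / k)" using N assms by (auto simp: field_simps)
  then show "eventually (\<lambda>T. P (T / k)) at_top" by (auto simp: eventually_at_top_linorder)
qed

lemma ftime_scale:
  assumes "k > 0" "\<forall>u\<in>V. \<forall>v\<in>V. len X' u v = k * len X u v" "finite \<sigma>" "\<sigma> \<noteq> {}"
  shows "ftime (V, E, X') \<sigma> = ereal k * ftime (V, E, X) \<sigma>"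
  unfolding ftime_def
  by (rule tvn_scale[OF assms(1) assms(3) assms(4) refl]) (simp add: spd_scale[OF assms(1,2)])

lemma cplx_scale:
  assumes "k > 0" "\<forall>u\<in>V. \<forall>v\<in>V. len X' u v = k * len X u v" "finite V"
  shows "cplx (V, E, X') s = cplx (V, E, X) (s / k)"
proof -
  have "\<sigma> \<subseteq> V \<Longrightarrow> \<sigma> \<noteq> {} \<Longrightarrow> (ftime (V, E, X') \<sigma> \<le> ereal s) = (ftime (V, E, X) \<sigma> \<le> ereal (s / k))" for \<sigma>
  proof -
    assume "\<sigma> \<subseteq> V" "\<sigma> \<noteq> {}"
    then have "ftime (V, E, X') \<sigma> = ereal k * ftime (V, E, X) \<sigma>"
      using ftime_scale[OF assms(1,2)] finite_subset[OF _ assms(3)] by blast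
    moreover have "ereal s = ereal k * ereal (s / k)" using assms(1) by simp
    ultimately show ?thesis by (simp only: cmult_le_iff[OF assms(1)])
  qed
  then show ?thesis unfolding cplx_def by auto
qed

lemma rk_scale:
  assumes "k > 0" "\<forall>u\<in>V. \<forall>v\<in>V. len X' u v = k * len X u v" "finite V"
  shows "rk (V, E, X') j s t = rk (V, E, X) j (s / k) (t / k)"
  unfolding rk_def using cplx_scale[OF assms] by simp

lemma mult_scale:
  assumes k: "k > 0" and H: "\<forall>s t. rk G' j s t = rk G j (s / k) (t / k)"
  shows "mult G' j (k * b) (ereal k * d) = mult G j b d"
proof (cases d)
  case (real d')
  have e1: "(k * b) / k = b" "(k * d') / k = d'" using k by auto
  have e2: "(k * b - e) / k = b - e / k" "(k * d' - e) / k = d' - e / k" for e using k by (auto simp: field_simps)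
  have "(\<lambda>m. eventually (\<lambda>e. rk G' j (k*b) (k*d' - e) - rk G' j (k*b - e) (k*d' - e)
                        - rk G' j (k*b) (k*d') + rk G' j (k*b - e) (k*d') = m) (at_right 0))
      = (\<lambda>m. eventually (\<lambda>e. rk G j b (d' - e) - rk G j (b - e) (d' - e)
                        - rk G j b d' + rk G j (b - e) d' = m) (at_right 0))"
    using ev_right_scale[OF k, where P = "\<lambda>e. rk G j b (d' - e) - rk G j (b - e) (d' - e)
                        - rk G j b d' + rk G j (b - e) d' = _"]
    by (simp add: H e1 e2)
  then show ?thesis using real by (simp add: mult_def)
next
  case PInf
  have e1: "(k * b) / k = b" using k by auto
  have e2: "(k * b - e) / k = b - e / k" for e using k by (auto simp: field_simps)
  have inner: "eventually (\<lambda>T. rk G' j (k*b) T - rk G' j (k*b - e) T = m) at_top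
     = eventually (\<lambda>T. rk G j b T - rk G j (b - e / k) T = m) at_top" for e m
    using ev_top_scale[OF k, where P = "\<lambda>T. rk G j b T - rk G j (b - e / k) T = m"]
    by (simp add: H e1 e2)
  have "(\<lambda>m. eventually (\<lambda>e. eventually (\<lambda>T. rk G' j (k*b) T - rk G' j (k*b - e) T = m) at_top) (at_right 0))
     = (\<lambda>m. eventually (\<lambda>e. eventually (\<lambda>T. rk G j b T - rk G j (b - e) T = m) at_top) (at_right 0))"
    unfolding inner
    using ev_right_scale[OF k, where P = "\<lambda>e. eventually (\<lambda>T. rk G j b T - rk G j (b - e) T = _) at_top"]
    by simp
  then show ?thesis using PInf k by (simp add: mult_def)
next
  case MInf
  then show ?thesis using k by (simp add: mult_def)
qed


definition scp :: "real \<Rightarrow> ereal \<times> ereal \<Rightarrow> ereal \<times> ereal" where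
  "scp c x = (ereal c * fst x, ereal c * snd x)"

fun phi :: "real \<Rightarrow> ((ereal \<times> ereal) \<times> nat + real) \<Rightarrow> ((ereal \<times> ereal) \<times> nat + real)" where
  "phi c (Inl (x, i)) = Inl (scp c x, i)"
| "phi c (Inr a) = Inr (c * a)"

lemma scp_inv: "k > 0 \<Longrightarrow> scp (1/k) (scp k x) = x" "k > 0 \<Longrightarrow> scp k (scp (1/k) x) = x"
  by (auto simp: scp_def cmult_inv cmult_inv2)

lemma phi_inv: "k > 0 \<Longrightarrow> phi (1/k) (phi k s) = s" "k > 0 \<Longrightarrow> phi k (phi (1/k) s) = s"
  by (cases s; auto simp: scp_inv)+

lemma slotpt_phi: "slotpt (phi k s) = scp k (slotpt s)"
  by (cases s) (auto simp: scp_def)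

lemma absk: "(k::real) > 0 \<Longrightarrow> \<bar>k * r - k * q\<bar> = k * \<bar>r - q\<bar>"
  by (metis abs_mult abs_of_pos right_diff_distrib)

lemma cdist_scale: assumes "k > 0" shows "cdist (ereal k * a) (ereal k * b) = ereal k * cdist a b"
proof (cases "a = b")
  case True then show ?thesis by (simp add: cdist_def)
next
  case False
  note aux = absk[OF assms]
  have "ereal k * a \<noteq> ereal k * b" using False cmult_inv[OF assms] by metis
  then show ?thesis using False assms unfolding cdist_def
    using aux by (cases a; cases b) auto
qed

lemma linf_scale: assumes "k > 0" shows "linf (scp k x) (scp k y) = ereal k * linf x y"
proof -
  have "max (ereal k * p) (ereal k * q) = ereal k * max p q" for p q
    using cmult_le_iff[OF assms] by (auto simp: max_def)
  then show ?thesis unfolding linf_def scp_def using cdist_scale[OF assms] by simp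
qed

lemma slots_scale:
  assumes "k > 0" "\<forall>x. \<mu>' (scp k x) = \<mu> x"
  shows "slots \<mu>' = phi k ` slots \<mu>"
proof -
  have m: "\<mu>' y = \<mu> (scp (1/k) y)" for y
  proof -
    have "\<mu>' y = \<mu>' (scp k (scp (1/k) y))" by (simp only: scp_inv(2)[OF assms(1)])
    also have "\<dots> = \<mu> (scp (1/k) y)" using assms(2) by blast
    finally show ?thesis .
  qed
  show ?thesis
  proof (rule set_eqI, rule iffI)
    fix s assume s: "s \<in> slots \<mu>'"
    show "s \<in> phi k ` slots \<mu>"
    proof (cases s)
      case (Inl p)
      then obtain y i where yi: "s = Inl (y, i)" "i < \<mu>' y" using s by (auto simp: slots_def)
      have "Inl (scp (1/k) y, i) \<in> slots \<mu>" using yi m unfolding slots_def by auto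
      moreover have "s = phi k (Inl (scp (1/k) y, i))" using yi scp_inv(2)[OF assms(1)] by simp
      ultimately show ?thesis by (rule rev_image_eqI)
    next
      case (Inr a)
      have "Inr (a / k) \<in> slots \<mu>" unfolding slots_def by simp
      moreover have "s = phi k (Inr (a / k))" using Inr assms(1) by simp
      ultimately show ?thesis by (rule rev_image_eqI)
    qed
  next
    fix s assume "s \<in> phi k ` slots \<mu>"
    then obtain t where t: "t \<in> slots \<mu>" "s = phi k t" by blast
    then show "s \<in> slots \<mu>'"
      using assms(2) by (cases t) (auto simp: slots_def)
  qed
qed

lemma inj_phi: "k > 0 \<Longrightarrow> inj (phi k)"
  by (metis injI phi_inv(1))

lemma bottleneck_scale:
  assumes k: "k > 0" and m: "\<forall>x. \<mu>' (scp k x) = \<mu> x" and n: "\<forall>x. \<nu>' (scp k x) = \<nu> x"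
  shows "bottleneck \<mu>' \<nu>' = ereal k * bottleneck \<mu> \<nu>"
proof -
  have k': "1/k > 0" using k by simp
  let ?B = "{\<pi>. bij_betw \<pi> (slots \<mu>) (slots \<nu>)}"
  let ?B' = "{\<pi>. bij_betw \<pi> (slots \<mu>') (slots \<nu>')}"
  define val where "val \<pi> = (SUP x \<in> slots \<mu>. linf (slotpt x) (slotpt (\<pi> x)))" for \<pi>
  define val' where "val' \<pi> = (SUP x \<in> slots \<mu>'. linf (slotpt x) (slotpt (\<pi> x)))" for \<pi>
  have sm: "slots \<mu>' = phi k ` slots \<mu>" and sn: "slots \<nu>' = phi k ` slots \<nu>"
    using slots_scale[OF k m] slots_scale[OF k n] by auto
  have sm': "slots \<mu> = phi (1/k) ` slots \<mu>'" and sn': "slots \<nu> = phi (1/k) ` slots \<nu>'"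
    unfolding sm sn image_image phi_inv(1)[OF k] by auto
  have i1: "inj_on (phi k) S" for S using inj_phi[OF k] by (rule inj_on_subset) simp
  have i2: "inj_on (phi (1/k)) S" for S using inj_phi[OF k'] by (rule inj_on_subset) simp
  have bm: "bij_betw (phi k) (slots \<mu>) (slots \<mu>')" "bij_betw (phi (1/k)) (slots \<mu>') (slots \<mu>)"
    unfolding bij_betw_def using i1 i2 sm sm' by auto
  have bn: "bij_betw (phi k) (slots \<nu>) (slots \<nu>')" "bij_betw (phi (1/k)) (slots \<nu>') (slots \<nu>)"
    unfolding bij_betw_def using i1 i2 sn sn' by auto
  have key: "val' \<pi>' = ereal k * val \<pi>" if "\<And>x. \<pi>' (phi k x) = phi k (\<pi> x)" for \<pi> \<pi>'
  proof -
    have "val' \<pi>' = (SUP x \<in> slots \<mu>. linf (slotpt (phi k x)) (slotpt (\<pi>' (phi k x))))"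
      unfolding val'_def sm image_image ..
    also have "\<dots> = (SUP x \<in> slots \<mu>. ereal k * linf (slotpt x) (slotpt (\<pi> x)))"
      using that by (simp add: slotpt_phi linf_scale[OF k])
    also have "\<dots> = ereal k * val \<pi>"
      unfolding val_def cmult_Sup[OF k] image_image ..
    finally show ?thesis .
  qed
  have "val' ` ?B' = (\<lambda>x. ereal k * x) ` (val ` ?B)"
  proof (rule set_eqI, rule iffI)
    fix v assume "v \<in> val' ` ?B'"
    then obtain \<pi>' where p: "bij_betw \<pi>' (slots \<mu>') (slots \<nu>')" "v = val' \<pi>'" by blast
    let ?\<pi> = "phi (1/k) \<circ> (\<pi>' \<circ> phi k)"
    have "bij_betw ?\<pi> (slots \<mu>) (slots \<nu>)"
      by (rule bij_betw_trans[OF bij_betw_trans[OF bm(1) p(1)] bn(2)])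
    moreover have "v = ereal k * val ?\<pi>"
      using p(2) key[of \<pi>' ?\<pi>] phi_inv(2)[OF k] by simp
    ultimately show "v \<in> (\<lambda>x. ereal k * x) ` (val ` ?B)"
      by (intro image_eqI[of v _ "val ?\<pi>"] imageI CollectI)
  next
    fix v assume "v \<in> (\<lambda>x. ereal k * x) ` (val ` ?B)"
    then obtain \<pi> where p: "bij_betw \<pi> (slots \<mu>) (slots \<nu>)" "v = ereal k * val \<pi>" by blast
    let ?\<pi>' = "phi k \<circ> (\<pi> \<circ> phi (1/k))"
    have "bij_betw ?\<pi>' (slots \<mu>') (slots \<nu>')"
      by (rule bij_betw_trans[OF bij_betw_trans[OF bm(2) p(1)] bn(1)])
    moreover have "v = val' ?\<pi>'"
      using p(2) key[of ?\<pi>' \<pi>] phi_inv(1)[OF k] by simp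
    ultimately show "v \<in> val' ` ?B'"
      by (intro image_eqI[of v _ ?\<pi>'] CollectI)
  qed
  note E = this
  have b1: "bottleneck \<mu>' \<nu>' = Inf (val' ` ?B')"
    unfolding bottleneck_def val'_def by (rule refl)
  have b2: "bottleneck \<mu> \<nu> = Inf (val ` ?B)"
    unfolding bottleneck_def val_def by (rule refl)
  show ?thesis unfolding b1 b2 E by (rule cmult_Inf[OF k, symmetric])
qed


lemma PD_scale_mult:
  assumes k: "k > 0" and M: "\<forall>j b d. mult G' j (k * b) (ereal k * d) = mult G j b d"
  shows "PD D G' (scp k x) = PD D G x"
proof (cases "\<exists>b. fst x = ereal b")
  case True
  then obtain b where b: "fst x = ereal b" by blast
  have "(ereal k * fst x < ereal k * snd x) = (fst x < snd x)" using cmult_less_iff[OF k] .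
  moreover have "ereal k * fst x = ereal (k * b)" using b by simp
  ultimately show ?thesis using b M unfolding PD_def scp_def by auto
next
  case False
  then have "fst x = \<infinity> \<or> fst x = -\<infinity>" by (cases "fst x") auto
  then have "\<not> (\<exists>b. ereal k * fst x = ereal b)" using k by auto
  then show ?thesis using False unfolding PD_def scp_def by auto
qed

lemma PD_scale_graph:
  assumes k: "k > 0" and L: "\<forall>u\<in>V. \<forall>v\<in>V. len X' u v = k * len X u v" and f: "finite V"
  shows "PD D (V, E, X') (scp k x) = PD D (V, E, X) x"
proof (rule PD_scale_mult[OF k], intro allI)
  fix j b d
  have "\<forall>s t. rk (V, E, X') j s t = rk (V, E, X) j (s / k) (t / k)"
    using rk_scale[OF k L f] by blast
  then show "mult (V, E, X') j (k * b) (ereal k * d) = mult (V, E, X) j b d"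
    by (rule mult_scale[OF k])
qed

lemma bottleneck_graphs:
  assumes k: "k > 0"
    and L1: "\<forall>u\<in>V. \<forall>v\<in>V. len X' u v = k * len X u v" and f1: "finite V"
    and L2: "\<forall>u\<in>W. \<forall>v\<in>W. len Y' u v = k * len Y u v" and f2: "finite W"
  shows "bottleneck (PD D (V, E, X')) (PD D (W, F, Y')) = ereal k * bottleneck (PD D (V, E, X)) (PD D (W, F, Y))"
  by (rule bottleneck_scale[OF k]) (simp_all add: PD_scale_graph[OF k L1 f1] PD_scale_graph[OF k L2 f2])

lemma subE_scale:
  assumes "k > 0" "\<forall>u v. len X' u v = k * len X u v"
  shows "subE E X' (k * \<theta>) = subE E X \<theta>"
  using assms unfolding subE_def by auto

lemma finite_hypernodes: "finite V \<Longrightarrow> finite (hypernodes V E X \<theta>)"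
  unfolding hypernodes_def quotient_def by auto

lemma rtr_in:
  assumes "S \<subseteq> V \<times> V" "(x, y) \<in> (S \<union> converse S)\<^sup>*" "x \<in> V"
  shows "y \<in> V"
  using assms(2,3)
proof (induction rule: rtrancl_induct)
  case base then show ?case .
next
  case (step y z) then show ?case using assms(1) by auto
qed

lemma hypernode_props:
  assumes "E \<subseteq> V \<times> V" "H \<in> hypernodes V E X \<theta>"
  shows "H \<noteq> {} \<and> H \<subseteq> V"
proof -
  let ?S = "subE E X \<theta>"
  have S: "?S \<subseteq> V \<times> V" using assms(1) unfolding subE_def by auto
  obtain x where x: "x \<in> V" "H = ((?S \<union> converse ?S)\<^sup>*) `` {x}"
    using assms(2) unfolding hypernodes_def quotient_def by blast
  have "x \<in> H" using x by auto
  moreover have "H \<subseteq> V" using x rtr_in[OF S] by blast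
  ultimately show ?thesis by blast
qed

lemma coarseX_sim:
  assumes "finite H" "H \<noteq> {}"
  shows "coarseX P V E (\<lambda>u. k *\<^sub>R (R *v X u) + A) H = k *\<^sub>R (R *v coarseX P V E X H) + A"
proof (cases P)
  case AvgPos
  have c: "real (card H) \<noteq> 0" using assms by simp
  have "(\<Sum>u\<in>H. k *\<^sub>R (R *v X u) + A) = k *\<^sub>R (R *v (\<Sum>u\<in>H. X u)) + real (card H) *\<^sub>R A"
    by (simp add: sum.distrib scaleR_sum_right linear_sum[OF matrix_vector_mul_linear] o_def sum_constant_scaleR del: sum_constant)
  then show ?thesis using AvgPos c
    by (simp add: coarseX_def scaleR_add_right matrix_vector_mult_scaleR)
next
  case (DegPos tb)
  then show ?thesis by (simp add: coarseX_def)
qed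

lemma real_of_ereal_cmult: "k > 0 \<Longrightarrow> real_of_ereal (ereal k * x) = k * real_of_ereal x"
  by (cases x) auto

lemma dBth_scale:
  fixes X :: "'v \<Rightarrow> real ^ 'p"
  assumes wf: "sg_wf (V, E, X)" and R: "orthogonal_matrix R" and k: "k > 0"
  shows "dBth P D (simact R A k (V, E, X)) (k * \<theta>) = ereal k * dBth P D (V, E, X) \<theta>"
    and "fst (snd (coarsen P (k * \<theta>) (simact R A k (V, E, X)))) = fst (snd (coarsen P \<theta> (V, E, X)))"
    and "sg_eq (coarsen P (k * \<theta>) (simact R A k (V, E, X))) (simact R A k (coarsen P \<theta> (V, E, X)))"
proof -
  define X' where "X' = (\<lambda>u. k *\<^sub>R (R *v X u) + A)"
  have fV: "finite V" and EV: "E \<subseteq> V \<times> V" using wf by (auto simp: sg_wf_def)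
  have G': "simact R A k (V, E, X) = (V, E, X')" by (simp add: simact_def X'_def)
  have L: "\<forall>u v. len X' u v = k * len X u v" unfolding X'_def by (intro allI) (rule len_sim[OF R k])
  have sub: "subE E X' (k * \<theta>) = subE E X \<theta>" by (rule subE_scale[OF k L])
  have hn: "hypernodes V E X' (k * \<theta>) = hypernodes V E X \<theta>" unfolding hypernodes_def sub ..
  have ce: "coarseE V E X' (k * \<theta>) = coarseE V E X \<theta>" unfolding coarseE_def hn ..
  define HV where "HV = hypernodes V E X \<theta>"
  define CE where "CE = coarseE V E X \<theta>"
  define cX where "cX = coarseX P V E X"
  define cX' where "cX' = coarseX P V E X'"
  have c1: "coarsen P (k * \<theta>) (V, E, X') = (HV, CE, cX')"
    by (simp add: coarsen_def HV_def CE_def cX'_def hn ce)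
  have c0: "coarsen P \<theta> (V, E, X) = (HV, CE, cX)"
    unfolding coarsen_def HV_def CE_def cX_def by simp
  have cx: "cX' H = k *\<^sub>R (R *v cX H) + A" if "H \<in> HV" for H
  proof -
    have "H \<noteq> {} \<and> H \<subseteq> V" using hypernode_props[OF EV] that unfolding HV_def by blast
    then have "finite H" "H \<noteq> {}" using fV finite_subset by auto
    then show ?thesis unfolding cX'_def cX_def X'_def by (rule coarseX_sim)
  qed
  have L2: "\<forall>u\<in>HV. \<forall>v\<in>HV. len cX' u v = k * len cX u v"
  proof (intro ballI)
    fix u v assume "u \<in> HV" "v \<in> HV"
    then have "len cX' u v = len (\<lambda>H. k *\<^sub>R (R *v cX H) + A) u v" by (simp add: len_def cx)
    then show "len cX' u v = k * len cX u v" using len_sim[OF R k] by simp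
  qed
  have fHV: "finite HV" unfolding HV_def using finite_hypernodes[OF fV] .
  show "dBth P D (simact R A k (V, E, X)) (k * \<theta>) = ereal k * dBth P D (V, E, X) \<theta>"
    unfolding dBth_def G' c1 c0
    by (rule bottleneck_graphs[OF k _ fV L2 fHV]) (simp add: L)
  show "fst (snd (coarsen P (k * \<theta>) (simact R A k (V, E, X)))) = fst (snd (coarsen P \<theta> (V, E, X)))"
    unfolding G' c1 c0 by simp
  show "sg_eq (coarsen P (k * \<theta>) (simact R A k (V, E, X))) (simact R A k (coarsen P \<theta> (V, E, X)))"
    unfolding G' c1 c0 by (simp add: sg_eq_def simact_def cx)
qed


theorem proposition3:
  fixes V :: "'v set" and E :: "('v \<times> 'v) set" and X :: "'v \<Rightarrow> real ^ 'p"
    and R :: "real ^ 'p ^ 'p" and A :: "real ^ 'p" and k :: real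
    and P :: "'v positioning" and D :: "nat set"
  assumes "sg_wf (V, E, X)" and "E \<noteq> {}" and "finite D" and "valid_pos P"
    and "orthogonal_matrix R" and "k > 0"
    and "0 < dBmax P D (V, E, X)" and "dBmax P D (V, E, X) < \<infinity>"
    and "\<exists>\<theta>\<ge>0. dBth P D (V, E, X) \<theta> = dBmax P D (V, E, X)"
  shows "(\<forall>\<theta>\<ge>0. score P D (simact R A k (V, E, X)) (k * \<theta>) = score P D (V, E, X) \<theta>)
    \<and> {\<beta>. is_minimizer (score P D (simact R A k (V, E, X))) \<beta>}
        = (\<lambda>\<theta>. k * \<theta>) ` {\<theta>. is_minimizer (score P D (V, E, X)) \<theta>}
    \<and> (\<forall>\<theta>s. is_minimizer (score P D (V, E, X)) \<theta>s \<longrightarrow>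
         is_minimizer (score P D (simact R A k (V, E, X))) (k * \<theta>s)
         \<and> sg_eq (coarsen P (k * \<theta>s) (simact R A k (V, E, X)))
                 (simact R A k (coarsen P \<theta>s (V, E, X))))"
proof -
  note wf = assms(1) and Rm = assms(5) and k = assms(6)
  let ?G = "(V, E, X)"
  let ?G' = "simact R A k (V, E, X)"
  define f where "f = score P D ?G"
  define f' where "f' = score P D ?G'"
  have E': "fst (snd ?G') = E" by (simp add: simact_def)
  have img: "{0::real..} = (\<lambda>\<theta>. k * \<theta>) ` {0..}"
  proof (rule set_eqI, rule iffI)
    fix x :: real assume "x \<in> {0..}"
    then have "x = k * (x / k)" "x / k \<in> {0..}" using k by auto
    then show "x \<in> (\<lambda>\<theta>. k * \<theta>) ` {0..}" by (rule rev_image_eqI[rotated])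
  next
    fix x assume "x \<in> (\<lambda>\<theta>. k * \<theta>) ` {0::real..}"
    then show "x \<in> {0..}" using k by auto
  qed
  have mx: "dBmax P D ?G' = ereal k * dBmax P D ?G"
  proof -
    have "dBmax P D ?G' = (SUP \<theta> \<in> {0..}. dBth P D ?G' (k * \<theta>))"
      unfolding dBmax_def by (subst img) (simp add: image_image)
    also have "\<dots> = (SUP \<theta> \<in> {0..}. ereal k * dBth P D ?G \<theta>)"
      using dBth_scale(1)[OF wf Rm k] by simp
    also have "\<dots> = ereal k * dBmax P D ?G"
      unfolding dBmax_def cmult_Sup[OF k] image_image ..
    finally show ?thesis .
  qed
  have sc: "f' (k * \<theta>) = f \<theta>" for \<theta>
  proof -
    define m where "m = real_of_ereal (dBmax P D ?G)"
    define d where "d = real_of_ereal (dBth P D ?G \<theta>)"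
    have "(1 / (k * m)) * (k * d) = (1 / m) * d" using k by (cases "m = 0") auto
    then show ?thesis unfolding f_def f'_def score_def E' dBth_scale(2)[OF wf Rm k] mx
        dBth_scale(1)[OF wf Rm k] real_of_ereal_cmult[OF k] m_def d_def by simp
  qed
  have mineq: "is_minimizer f' \<beta> = is_minimizer f (\<beta> / k)" for \<beta>
  proof -
    have fb: "f' \<beta> = f (\<beta> / k)" using sc[of "\<beta> / k"] k by simp
    have "(\<forall>\<theta>'\<ge>0. f' \<beta> \<le> f' \<theta>') = (\<forall>\<theta>'\<ge>0. f (\<beta> / k) \<le> f \<theta>')"
    proof
      assume H: "\<forall>\<theta>'\<ge>0. f' \<beta> \<le> f' \<theta>'"
      show "\<forall>\<theta>'\<ge>0. f (\<beta> / k) \<le> f \<theta>'"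
      proof (intro allI impI)
        fix t :: real assume "t \<ge> 0"
        then have "f' \<beta> \<le> f' (k * t)" using H k by simp
        then show "f (\<beta> / k) \<le> f t" using fb sc by simp
      qed
    next
      assume H: "\<forall>\<theta>'\<ge>0. f (\<beta> / k) \<le> f \<theta>'"
      show "\<forall>\<theta>'\<ge>0. f' \<beta> \<le> f' \<theta>'"
      proof (intro allI impI)
        fix t :: real assume "t \<ge> 0"
        then have "f (\<beta> / k) \<le> f (t / k)" using H k by simp
        moreover have "f' t = f (t / k)" using sc[of "t / k"] k by simp
        ultimately show "f' \<beta> \<le> f' t" using fb by simp
      qed
    qed
    moreover have "(\<beta> \<ge> 0) = (\<beta> / k \<ge> 0)" using k by (simp add: zero_le_divide_iff)
    ultimately show ?thesis unfolding is_minimizer_def by simp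
  qed
  have p1: "\<forall>\<theta>\<ge>0. f' (k * \<theta>) = f \<theta>" using sc by simp
  have p2: "{\<beta>. is_minimizer f' \<beta>} = (\<lambda>\<theta>. k * \<theta>) ` {\<theta>. is_minimizer f \<theta>}"
  proof (rule set_eqI, rule iffI)
    fix x assume "x \<in> {\<beta>. is_minimizer f' \<beta>}"
    then have "is_minimizer f (x / k)" "x = k * (x / k)" using mineq k by auto
    then show "x \<in> (\<lambda>\<theta>. k * \<theta>) ` {\<theta>. is_minimizer f \<theta>}" by blast
  next
    fix x assume "x \<in> (\<lambda>\<theta>. k * \<theta>) ` {\<theta>. is_minimizer f \<theta>}"
    then obtain t where "x = k * t" "is_minimizer f t" by blast
    then show "x \<in> {\<beta>. is_minimizer f' \<beta>}" using mineq k by simp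
  qed
  have p3: "is_minimizer f' (k * t)" if "is_minimizer f t" for t
    using that mineq k by simp
  show ?thesis
    using p1 p2 p3 dBth_scale(3)[OF wf Rm k] unfolding f_def f'_def by blast
qed

end
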